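(* Fix integers $2\le d\le n$ and $m\ge1$, and let $\lambda=\log n+m\log(1-d/n)$. Then \[ \mathbb{P}(H^*_{nmd}\text{ is disconnected})\ \le\ e^{\lambda}+\sum_{r=1}^\infty e^{(\lambda+5)r}+(2/e)^n. \]
   Context: $H^*_{nmd}$ is the random hypergraph on node set $\{1,\dots,n\}$ whose hyperedge set is $\{V_1,\dots,V_m\}$, with $V_1,\dots,V_m$ mutually independent uniformly random $d$-element subsets of $\{1,\dots,n\}$. A hypergraph on node set $V$ is connected if for every partition of $V$ into nonempty sets $V_1',V_2'$ some hyperedge meets both; otherwise disconnected. Conventions $\log0=-\infty$, $e^{-\infty}=0$; the series may equal $+\infty$. *)

theory Defs
  imports "HOL-Probability.Probability"
begin

definition hg_connected :: "'a set \<Rightarrow> 'a set set \<Rightarrow> bool" where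
  "hg_connected V E \<longleftrightarrow>
     (\<forall>V1 V2. V1 \<noteq> {} \<longrightarrow> V2 \<noteq> {} \<longrightarrow> V1 \<inter> V2 = {} \<longrightarrow> V1 \<union> V2 = V \<longrightarrow>
        (\<exists>e\<in>E. e \<inter> V1 \<noteq> {} \<and> e \<inter> V2 \<noteq> {}))"

definition random_dsubset :: "nat \<Rightarrow> nat \<Rightarrow> nat set pmf" where
  "random_dsubset n d = pmf_of_set {S. S \<subseteq> {1..n} \<and> card S = d}"

definition H_star :: "nat \<Rightarrow> nat \<Rightarrow> nat \<Rightarrow> nat set set pmf" where
  "H_star n m d = map_pmf (\<lambda>V. V ` {1..m}) (Pi_pmf {1..m} {} (\<lambda>_. random_dsubset n d))"

text \<open>e^lambda with lambda = log n + m log(1 - d/n), using log 0 = -inf, e^(-inf) = 0.\<close>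
definition exp_lambda :: "nat \<Rightarrow> nat \<Rightarrow> nat \<Rightarrow> real" where
  "exp_lambda n m d = real n * (1 - real d / real n) ^ m"

end

theory Submission
  imports Defs
begin


lemma bern_convex:
  fixes y k :: real
  assumes "0 \<le> y" "y \<le> 1" "1 \<le> k"
  shows "1 - k * y \<le> (1 - y) powr k"
proof (cases "y = 1")
  case True then show ?thesis using assms by simp
next
  case False
  define A where "A = (1 - y) powr k"
  have A: "A > 0" using False assms by (simp add: A_def)
  have "A powr (1/k) = 1 - y" using assms False by (simp add: A_def powr_powr)
  moreover have "A powr (1/k) * 1 powr (1 - 1/k) \<le> (1/k) * A + (1 - 1/k) * 1"
    by (rule Youngs_inequality_0) (use assms A in auto)
  ultimately have "1 - y \<le> A / k + 1 - 1/k" by simp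
  then have "k * (1 - y) \<le> k * (A / k + 1 - 1/k)" using assms by (simp add: mult_left_mono)
  then have "k * (1 - y) \<le> A + k - 1" using assms by (simp add: algebra_simps)
  then show ?thesis unfolding A_def by (simp add: algebra_simps)
qed

lemma choose_rec_real:
  "real (a choose Suc j) * (real j + 1) = real (a choose j) * (real a - real j)"
proof (cases "a \<le> j")
  case True
  then show ?thesis
    by (cases "a = j") (auto simp: binomial_eq_0)
next
  case False
  then obtain a' where a: "a = Suc a'" by (cases a) auto
  have "Suc j * (Suc a' choose Suc j) = Suc a' * (a' choose j)" by (rule Suc_times_binomial)
  moreover have "(a - j) * (a choose j) = a * ((a - 1) choose j)" by (rule binomial_absorb_comp)
  ultimately have "Suc j * (a choose Suc j) = (a - j) * (a choose j)" using a by simp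
  then have "real (Suc j * (a choose Suc j)) = real ((a - j) * (a choose j))" by simp
  then show ?thesis using False by (simp add: of_nat_diff algebra_simps)
qed


lemma p_bound:
  fixes n s d :: nat
  assumes d2: "2 \<le> d" and dn: "d \<le> n" and s1: "1 \<le> s" and sn: "s < n"
  shows "(real (s choose d) + real ((n-s) choose d)) / real (n choose d)
         \<le> (1 - real d / real n) powr (real s * real (n-s) / real (n-1))"
proof -
  define k where "k = real s * real (n-s) / real (n-1)"
  define \<mu> where "\<mu> = real (min s (n-s))"
  have n2: "n \<ge> 2" using sn s1 by simp
  have rns: "real (n-s) = real n - real s" using sn by simp
  have rn1: "real (n-1) = real n - 1" using n2 by simp
  have kge1: "k \<ge> 1"
  proof -
    have "(real s - 1) * (real n - real s - 1) \<ge> 0" using s1 sn by simp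
    then have "real s * (real n - real s) \<ge> real n - 1" by (simp add: algebra_simps)
    then show ?thesis unfolding k_def rns rn1 using n2 by simp
  qed
  have kmu: "k \<le> \<mu>"
  proof -
    have "real s * (real n - real s) \<le> real s * (real n - 1)" using s1 by (simp add: mult_left_mono)
    moreover have "real s * (real n - real s) \<le> (real n - real s) * (real n - 1)"
      using s1 sn by (simp add: mult_right_mono)
    ultimately show ?thesis unfolding k_def \<mu>_def rns rn1 using n2 sn rns
      by (auto simp: min_def field_simps of_nat_diff)
  qed
  have mu1: "\<mu> \<le> real n - real s" and mu2: "\<mu> \<le> real s"
    unfolding \<mu>_def using sn by (simp_all add: of_nat_diff)
  define P where "P j = (real (s choose j) + real ((n-s) choose j)) / real (n choose j)" for j
  have rec: "real (a choose Suc j) = real (a choose j) * (real a - real j) / (real j + 1)" for a j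
    using choose_rec_real[of a j] by (simp add: field_simps)
  have base: "P 2 \<le> (1 - 2 / real n) powr k"
  proof -
    have c2: "real (a choose 2) = real a * (real a - 1) / 2" for a
      using rec[of a 1] by (simp add: numeral_2_eq_2)
    have "P 2 = (real s * (real s - 1) + (real n - real s) * (real n - real s - 1)) / (real n * (real n - 1))"
    proof -
      have "real n * (real n - 1) > 0" using n2 by simp
      have h: "(a * 2 + b * 2) / (2 * c) = (a + b) / c" for a b c :: real
        by (metis distrib_right mult.commute mult_divide_mult_cancel_left_if zero_neq_numeral)
      then show ?thesis unfolding P_def c2 rns by (simp add: add_divide_distrib[symmetric] h)
    qed
    also have "\<dots> = 1 - k * (2 / real n)"
      unfolding k_def rns rn1 using n2 by (simp add: field_simps)
    also have "\<dots> \<le> (1 - 2 / real n) powr k"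
      by (rule bern_convex) (use n2 kge1 in auto)
    finally show ?thesis .
  qed
  have "P d \<le> (1 - real d / real n) powr k" using d2 dn
  proof (induction d rule: dec_induct)
    case base then show ?case using \<open>P 2 \<le> _\<close> by simp
  next
    case (step j)
    have jn: "j < n" using step by simp
    have Cpos: "real (n choose j) > 0" using jn by simp
    have nj: "real n - real j > 0" using jn by simp
    have "P (Suc j) = (real (s choose j) * (real s - real j) + real ((n-s) choose j) * (real n - real s - real j))
               / (real (n choose j) * (real n - real j))"
    proof -
      have h2: "(a / u + b / u) / (c / u) = (a + b) / c" if "u > 0" for a b c u :: real
        using that by (cases "c = 0") (auto simp: field_simps)
      have "P (Suc j) = (real (s choose j) * (real s - real j) / (real j+1) + real ((n-s) choose j) * (real n - real s - real j)/(real j+1)) / (real (n choose j) * (real n - real j) / (real j+1))"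
        unfolding P_def rec rns by simp
      then show ?thesis by (simp only: h2)
    qed
    also have "\<dots> \<le> (real (s choose j) + real ((n-s) choose j)) * (real n - real j - \<mu>)
               / (real (n choose j) * (real n - real j))"
    proof (rule divide_right_mono)
      have "real (s choose j) * (real s - real j) \<le> real (s choose j) * (real n - real j - \<mu>)"
        by (rule mult_left_mono) (use mu1 mu2 in simp_all)
      moreover have "real ((n-s) choose j) * (real n - real s - real j) \<le> real ((n-s) choose j) * (real n - real j - \<mu>)"
        by (rule mult_left_mono) (use mu1 mu2 in simp_all)
      ultimately show "real (s choose j) * (real s - real j) + real ((n-s) choose j) * (real n - real s - real j)
          \<le> (real (s choose j) + real ((n-s) choose j)) * (real n - real j - \<mu>)"
        by (simp add: algebra_simps)
    qed (use Cpos nj in simp)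
    also have "\<dots> = P j * ((real n - real j - \<mu>) / (real n - real j))"
      unfolding P_def using Cpos nj by (simp add: field_simps)
    finally have PS: "P (Suc j) \<le> P j * ((real n - real j - \<mu>) / (real n - real j))" .
    show ?case
    proof (cases "real n - real j - \<mu> \<le> 0")
      case True
      have "P j \<ge> 0" unfolding P_def by simp
      have "(real n - real j - \<mu>) / (real n - real j) \<le> 0"
        using True nj by (simp add: divide_nonpos_pos)
      then have "P j * ((real n - real j - \<mu>) / (real n - real j)) \<le> 0"
        using \<open>P j \<ge> 0\<close> mult_nonneg_nonpos by blast
      then have "P (Suc j) \<le> 0" using PS by linarith
      moreover have "0 \<le> (1 - real (Suc j) / real n) powr k" by simp
      ultimately show ?thesis by linarith
    next
      case False
      have "P (Suc j) \<le> (1 - real j / real n) powr k * ((real n - real j - \<mu>) / (real n - real j))"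
      proof -
        have "0 \<le> (real n - real j - \<mu>) / (real n - real j)" using False nj by simp
        then have "P j * ((real n - real j - \<mu>) / (real n - real j))
            \<le> (1 - real j / real n) powr k * ((real n - real j - \<mu>) / (real n - real j))"
          by (rule mult_right_mono[OF step.IH[OF less_imp_le[OF jn]]])
        then show ?thesis using PS by linarith
      qed
      also have "(real n - real j - \<mu>) / (real n - real j) \<le> 1 - k * (1 / (real n - real j))"
      proof -
        have "k / (real n - real j) \<le> \<mu> / (real n - real j)"
          by (rule divide_right_mono[OF kmu]) (use nj in simp)
        moreover have "(real n - real j - \<mu>) / (real n - real j) = 1 - \<mu> / (real n - real j)"
          using nj by (simp add: diff_divide_distrib)
        ultimately show ?thesis by simp
      qed
      also have "\<dots> \<le> (1 - 1 / (real n - real j)) powr k"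
        by (rule bern_convex) (use nj kge1 jn in \<open>auto simp: field_simps\<close>)
      finally have "P (Suc j) \<le> (1 - real j / real n) powr k * (1 - 1 / (real n - real j)) powr k"
        by (simp add: mult_left_mono)
      also have "\<dots> = ((1 - real j / real n) * (1 - 1 / (real n - real j))) powr k"
        by (rule powr_mult[symmetric]; use jn nj in \<open>auto simp: field_simps\<close>)
      also have "(1 - real j / real n) * (1 - 1 / (real n - real j)) = 1 - real (Suc j) / real n"
        using nj n2 by (simp add: field_simps)
      finally show ?thesis .
    qed
  qed
  then show ?thesis unfolding P_def k_def .
qed



lemma pow_fact_le_exp:
  fixes x :: real and s :: nat
  assumes "0 \<le> x"
  shows "x ^ s / fact s \<le> exp x"
proof -
  have "x ^ s / fact s \<le> (\<Sum>i\<le>s. x ^ i / fact i)"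
    by (rule member_le_sum) (use assms in auto)
  also have "\<dots> \<le> exp x"
    using assms summable_exp_generic[of x]
    by (auto simp: exp_def divide_inverse ac_simps intro!: sum_le_suminf)
  finally show ?thesis .
qed

lemma choose_pow_le:
  fixes n s :: nat
  shows "real (n choose s) * real s ^ s \<le> exp (real s) * real n ^ s"
proof -
  have a: "real (n choose s) * fact s \<le> real n ^ s"
    using binomial_fact_pow[of n s] by (metis of_nat_fact of_nat_le_iff of_nat_mult of_nat_power)
  have b: "real s ^ s \<le> exp (real s) * fact s"
    using pow_fact_le_exp[of "real s" s] by (simp add: divide_le_eq)
  have "real (n choose s) * real s ^ s \<le> real (n choose s) * (exp (real s) * fact s)"
    by (rule mult_left_mono[OF b]) simp
  also have "\<dots> = exp (real s) * (real (n choose s) * fact s)" by simp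
  also have "\<dots> \<le> exp (real s) * real n ^ s"
    by (rule mult_left_mono[OF a]) simp
  finally show ?thesis .
qed

lemma term_bound:
  fixes n s :: nat and Q :: real
  assumes s2: "2 \<le> s" and sK: "2 * s \<le> n" and Q0: "0 \<le> Q" and QN: "Q * (exp 5 * real n) \<le> 1"
  shows "real (n choose s) * Q powr (real s * real (n-s) / real (n-1)) \<le> Q * (exp 5 * real n) * (1/2)^s"
proof (cases "Q = 0")
  case True then show ?thesis by simp
next
  case False
  then have Qp: "Q > 0" using Q0 by simp
  define N where "N = exp 5 * real n"
  define k where "k = real s * real (n-s) / real (n-1)"
  define \<theta> where "\<theta> = (real s - 1) / (real n - 1)"
  have n4: "n \<ge> 4" using s2 sK by simp
  have Np: "N > 0" unfolding N_def using n4 by simp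
  have rns: "real (n-s) = real n - real s" using sK by simp
  have rn1: "real (n-1) = real n - 1" using n4 by simp
  have kge1: "k \<ge> 1"
  proof -
    have "(real s - 1) * (real n - real s - 1) \<ge> 0" using s2 sK by simp
    then have "real s * (real n - real s) \<ge> real n - 1" by (simp add: algebra_simps)
    then show ?thesis unfolding k_def rns rn1 using n4 by simp
  qed
  have th0: "0 \<le> \<theta>" and th1: "\<theta> \<le> 1/2" unfolding \<theta>_def using s2 sK n4 by (auto simp: field_simps)
  have kth: "- k = - real s + real s * \<theta>"
    unfolding k_def \<theta>_def rns rn1 using n4 by (simp add: field_simps)
  have QNle: "Q \<le> 1 / N" using QN Np unfolding N_def by (simp add: field_simps)
  have "Q powr k = Q * Q powr (k - 1)" using Qp powr_add[of Q 1 "k-1"] by simp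
  also have "\<dots> \<le> Q * (1 / N) powr (k - 1)"
    by (rule mult_left_mono[OF powr_mono2]) (use kge1 Q0 QNle in auto)
  also have "(1 / N) powr (k - 1) = N * N powr (- k)"
    using Np by (simp add: powr_divide powr_add[symmetric] powr_diff powr_minus field_simps)
  finally have A: "Q powr k \<le> Q * (N * N powr (- k))" .
  have nth: "real n powr \<theta> \<le> real s"
  proof -
    have "real n powr \<theta> * 1 powr (1 - \<theta>) \<le> \<theta> * real n + (1 - \<theta>) * 1"
      by (rule Youngs_inequality_0) (use th0 th1 n4 in auto)
    also have "\<theta> * real n + (1 - \<theta>) * 1 = real s"
    proof -
      have t: "\<theta> * (real n - 1) = real s - 1" unfolding \<theta>_def using n4 by simp
      then show ?thesis by (simp add: algebra_simps)
    qed
    finally show ?thesis by simp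
  qed
  have Nth: "N powr \<theta> \<le> exp (5/2) * real s"
  proof -
    have "N powr \<theta> = exp 5 powr \<theta> * real n powr \<theta>"
      unfolding N_def by (simp add: powr_mult)
    also have "exp 5 powr \<theta> = exp (5 * \<theta>)" by (simp add: powr_def)
    also have "exp (5 * \<theta>) \<le> exp (5/2)" using th1 by simp
    finally have "N powr \<theta> \<le> exp (5/2) * real n powr \<theta>"
      by (simp add: mult_right_mono)
    also have "\<dots> \<le> exp (5/2) * real s"
      by (rule mult_left_mono[OF nth]) simp
    finally show ?thesis .
  qed
  have B: "N powr (- k) \<le> (exp (5/2) * real s) ^ s / N ^ s"
  proof -
    have "N powr (- k) = N powr (- real s) * N powr (real s * \<theta>)"
      unfolding kth using powr_add[of N "- real s" "real s * \<theta>"] by simp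
    also have "N powr (real s * \<theta>) = (N powr \<theta>) ^ s"
      using Np by (simp add: powr_powr[symmetric] powr_realpow mult.commute)
    also have "N powr (- real s) = 1 / N ^ s"
      using Np by (simp add: powr_minus powr_realpow divide_inverse)
    finally have "N powr (- k) = (N powr \<theta>) ^ s / N ^ s" by simp
    also have "\<dots> \<le> (exp (5/2) * real s) ^ s / N ^ s"
      by (intro divide_right_mono power_mono Nth) (use Np in auto)
    finally show ?thesis .
  qed
  have C: "real (n choose s) * N powr (- k) \<le> (1/2) ^ s"
  proof -
    have "real (n choose s) * N powr (- k) \<le> real (n choose s) * ((exp (5/2) * real s) ^ s / N ^ s)"
      by (rule mult_left_mono[OF B]) simp
    also have "\<dots> = (real (n choose s) * real s ^ s) * (exp (5/2) / exp 5) ^ s / real n ^ s"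
      unfolding N_def by (simp add: power_mult_distrib power_divide field_simps)
    also have "\<dots> \<le> (exp (real s) * real n ^ s) * (exp (5/2) / exp 5) ^ s / real n ^ s"
      by (intro divide_right_mono mult_right_mono choose_pow_le) auto
    also have "\<dots> = (exp 1 * (exp (5/2) / exp 5)) ^ s"
      using n4 exp_of_nat_mult[of s "1::real"] by (simp add: power_mult_distrib power_divide)
    also have "exp (1::real) * (exp (5/2) / exp 5) = exp (- 3/2)"
    proof -
      have "exp (- 3/2::real) = exp (1 + 5/2 - 5)" by simp
      also have "\<dots> = exp 1 * (exp (5/2) / exp 5)" by (simp only: exp_diff exp_add times_divide_eq_right)
      finally show ?thesis by simp
    qed
    also have "exp (- 3/2::real) ^ s \<le> (1/2) ^ s"
    proof (rule power_mono)
      have "exp (3/2::real) \<ge> 1 + 3/2" by (rule exp_ge_add_one_self)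
      then show "exp (- 3/2::real) \<le> 1/2" by (simp add: exp_minus field_simps)
    qed simp
    finally show ?thesis .
  qed
  have "real (n choose s) * Q powr k \<le> real (n choose s) * (Q * (N * N powr (- k)))"
    by (rule mult_left_mono[OF A]) simp
  also have "\<dots> = Q * N * (real (n choose s) * N powr (- k))" by simp
  also have "\<dots> \<le> Q * N * (1/2)^s"
    by (rule mult_left_mono[OF C]) (use Q0 Np in simp)
  finally show ?thesis unfolding k_def N_def .
qed


lemma geo_half: "(\<Sum>s=2..K. (1/2::real)^s) \<le> 1"
proof (cases "2 \<le> K")
  case True
  have "(1 - 1/2) * (\<Sum>s=2..K. (1/2::real)^s) = (1/2)^2 - (1/2)^Suc K"
    by (rule sum_gp_multiplied[OF True])
  then have "(\<Sum>s=2..K. (1/2::real)^s) = 1/2 - 2 * (1/2)^Suc K" by (simp add: power2_eq_square)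
  also have "\<dots> \<le> 1" using zero_le_power[of "1/2::real" "Suc K"] by linarith
  finally show ?thesis .
qed simp

lemma total_bound:
  fixes n :: nat and Q :: real
  assumes n2: "2 \<le> n" and Q0: "0 \<le> Q" and QN: "Q * (exp 5 * real n) \<le> 1"
  shows "(\<Sum>s\<in>{1..n div 2}. real (n choose s) * Q powr (real s * real (n-s) / real (n-1)))
         \<le> real n * Q + Q * (exp 5 * real n)"
proof -
  have K: "1 \<le> n div 2" using n2 by simp
  have split: "{1..n div 2} = insert 1 {2..n div 2}" using K by auto
  have t1: "real (n choose 1) * Q powr (real 1 * real (n-1) / real (n-1)) = real n * Q"
    using n2 Q0 by simp
  have "(\<Sum>s\<in>{2..n div 2}. real (n choose s) * Q powr (real s * real (n-s) / real (n-1)))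
        \<le> (\<Sum>s\<in>{2..n div 2}. Q * (exp 5 * real n) * (1/2)^s)"
    by (rule sum_mono, rule term_bound) (use Q0 QN in auto)
  also have "\<dots> = Q * (exp 5 * real n) * (\<Sum>s=2..n div 2. (1/2::real)^s)"
    by (simp add: sum_distrib_left)
  also have "\<dots> \<le> Q * (exp 5 * real n) * 1"
    by (rule mult_left_mono[OF geo_half]) (use Q0 in simp)
  finally have "(\<Sum>s\<in>{2..n div 2}. real (n choose s) * Q powr (real s * real (n-s) / real (n-1)))
        \<le> Q * (exp 5 * real n)" by simp
  moreover have "(\<Sum>s\<in>{1..n div 2}. real (n choose s) * Q powr (real s * real (n-s) / real (n-1)))
     = real (n choose 1) * Q powr (real 1 * real (n-1) / real (n-1)) +
       (\<Sum>s\<in>{2..n div 2}. real (n choose s) * Q powr (real s * real (n-s) / real (n-1)))"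
    unfolding split by (rule sum.insert) auto
  ultimately show ?thesis using t1 by linarith
qed



lemma prob_G:
  fixes n d :: nat and S :: "nat set"
  assumes d1: "1 \<le> d" and Sn: "S \<subseteq> {1..n}" and dn: "d \<le> n"
  shows "measure_pmf.prob (random_dsubset n d) {T. T \<subseteq> {1..n} \<longrightarrow> T \<subseteq> S \<or> T \<inter> S = {}}
     = (real (card S choose d) + real ((n - card S) choose d)) / real (n choose d)"
proof -
  define D where "D = {T. T \<subseteq> {1..n} \<and> card T = d}"
  have cD: "card D = n choose d" unfolding D_def using n_subsets[of "{1..n}" d] by simp
  have fD: "finite D" unfolding D_def by (rule finite_subset[of _ "Pow {1..n}"]) auto
  have neD: "D \<noteq> {}" using cD dn fD by auto
  have eq: "D \<inter> {T. T \<subseteq> {1..n} \<longrightarrow> T \<subseteq> S \<or> T \<inter> S = {}}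
      = {T. T \<subseteq> S \<and> card T = d} \<union> {T. T \<subseteq> {1..n} - S \<and> card T = d}"
    unfolding D_def using Sn by auto
  have disj: "{T. T \<subseteq> S \<and> card T = d} \<inter> {T. T \<subseteq> {1..n} - S \<and> card T = d} = {}"
  proof -
    have False if "T \<subseteq> S" "T \<subseteq> {1..n} - S" "card T = d" for T
    proof -
      have "T = {}" using that by blast
      then show False using that d1 by simp
    qed
    then show ?thesis by blast
  qed
  have fS: "finite S" using Sn finite_subset by blast
  have c1: "card {T. T \<subseteq> S \<and> card T = d} = card S choose d" using n_subsets[OF fS] .
  have c2: "card {T. T \<subseteq> {1..n} - S \<and> card T = d} = (n - card S) choose d"
  proof -
    have cd: "card ({1..n} - S) = n - card S" using card_Diff_subset[OF fS Sn] by simp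
    show ?thesis unfolding n_subsets[of "{1..n} - S" d, OF finite_Diff[OF finite_atLeastAtMost]] cd ..
  qed
  have f1: "finite {T. T \<subseteq> S \<and> card T = d}" by (rule finite_subset[of _ "Pow S"]) (use fS in auto)
  have f2: "finite {T. T \<subseteq> {1..n} - S \<and> card T = d}" by (rule finite_subset[of _ "Pow {1..n}"]) auto
  have "measure_pmf.prob (random_dsubset n d) {T. T \<subseteq> {1..n} \<longrightarrow> T \<subseteq> S \<or> T \<inter> S = {}}
      = real (card (D \<inter> {T. T \<subseteq> {1..n} \<longrightarrow> T \<subseteq> S \<or> T \<inter> S = {}})) / real (card D)"
    unfolding random_dsubset_def D_def[symmetric] by (rule measure_pmf_of_set[OF neD fD])
  also have "card (D \<inter> {T. T \<subseteq> {1..n} \<longrightarrow> T \<subseteq> S \<or> T \<inter> S = {}}) = (card S choose d) + ((n - card S) choose d)"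
    unfolding eq card_Un_disjoint[OF f1 f2 disj] c1 c2 by simp
  finally show ?thesis using cD by simp
qed

lemma prob_Pi:
  fixes n d m :: nat and S :: "nat set"
  assumes d1: "1 \<le> d" and Sn: "S \<subseteq> {1..n}" and dn: "d \<le> n"
  shows "measure_pmf.prob (Pi_pmf {1..m} {} (\<lambda>_. random_dsubset n d))
            (Pi {1..m} (\<lambda>_. {T. T \<subseteq> {1..n} \<longrightarrow> T \<subseteq> S \<or> T \<inter> S = {}}))
     = ((real (card S choose d) + real ((n - card S) choose d)) / real (n choose d)) ^ m"
  using prob_G[OF assms] by (subst measure_Pi_pmf_Pi) auto


lemma disc_subset:
  fixes V :: "nat \<Rightarrow> nat set"
  assumes "\<not> hg_connected {1..n} (V ` {1..m})"
  shows "\<exists>S. S \<subseteq> {1..n} \<and> 1 \<le> card S \<and> 2 * card S \<le> n \<and>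
            (\<forall>i\<in>{1..m}. V i \<in> {T. T \<subseteq> {1..n} \<longrightarrow> T \<subseteq> S \<or> T \<inter> S = {}})"
proof -
  from assms obtain V1 V2 where ne1: "V1 \<noteq> {}" and ne2: "V2 \<noteq> {}" and dj: "V1 \<inter> V2 = {}"
    and un: "V1 \<union> V2 = {1..n}" and no: "\<forall>e\<in>V ` {1..m}. \<not> (e \<inter> V1 \<noteq> {} \<and> e \<inter> V2 \<noteq> {})"
    unfolding hg_connected_def by meson
  have f1: "finite V1" and f2: "finite V2" using un by (metis finite_Un finite_atLeastAtMost)+
  have cs: "card V1 + card V2 = n" using card_Un_disjoint[OF f1 f2 dj] un by simp
  define S where "S = (if 2 * card V1 \<le> n then V1 else V2)"
  have "S \<subseteq> {1..n}" unfolding S_def using un by auto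
  moreover have "1 \<le> card S" unfolding S_def using ne1 ne2 f1 f2
    by (auto simp: Suc_le_eq card_gt_0_iff)
  moreover have "2 * card S \<le> n" unfolding S_def using cs by auto
  moreover have "\<forall>i\<in>{1..m}. V i \<in> {T. T \<subseteq> {1..n} \<longrightarrow> T \<subseteq> S \<or> T \<inter> S = {}}"
  proof
    fix i assume i: "i \<in> {1..m}"
    show "V i \<in> {T. T \<subseteq> {1..n} \<longrightarrow> T \<subseteq> S \<or> T \<inter> S = {}}"
    proof -
     have "V i \<inter> S = {}" if sub: "V i \<subseteq> {1..n}" and ns: "\<not> V i \<subseteq> S"
     proof -
      have "V i \<inter> V1 = {} \<or> V i \<inter> V2 = {}" using no i by blast
      then show "V i \<inter> S = {}"
      proof
        assume a: "V i \<inter> V1 = {}"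
        then have "V i \<subseteq> V2" using sub un by blast
        then show ?thesis using ns a unfolding S_def by (cases "2 * card V1 \<le> n") auto
      next
        assume a: "V i \<inter> V2 = {}"
        then have "V i \<subseteq> V1" using sub un by blast
        then show ?thesis using ns a unfolding S_def by (cases "2 * card V1 \<le> n") auto
      qed
     qed
     then show ?thesis by blast
    qed
  qed
  ultimately show ?thesis by blast
qed

lemma disc_bound:
  fixes n m d :: nat
  assumes d1: "1 \<le> d" and dn: "d \<le> n"
  shows "measure_pmf.prob (H_star n m d) {E. \<not> hg_connected {1..n} E}
    \<le> (\<Sum>s\<in>{1..n div 2}. real (n choose s) *
          ((real (s choose d) + real ((n - s) choose d)) / real (n choose d)) ^ m)"
proof -
  define M where "M = Pi_pmf {1..m} {} (\<lambda>_. random_dsubset n d)"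
  define G where "G S = {T. T \<subseteq> {1..n} \<longrightarrow> T \<subseteq> S \<or> T \<inter> S = {}}" for S :: "nat set"
  define B where "B S = Pi {1..m} (\<lambda>_. G S)" for S
  define SS where "SS = {S. S \<subseteq> {1..n} \<and> 1 \<le> card S \<and> 2 * card S \<le> n}"
  define h where "h s = ((real (s choose d) + real ((n - s) choose d)) / real (n choose d)) ^ m" for s
  have fSS: "finite SS" unfolding SS_def by (rule finite_subset[of _ "Pow {1..n}"]) auto
  have "measure_pmf.prob (H_star n m d) {E. \<not> hg_connected {1..n} E}
      = measure_pmf.prob M ((\<lambda>V. V ` {1..m}) -` {E. \<not> hg_connected {1..n} E})"
    unfolding H_star_def M_def by simp
  also have "\<dots> \<le> measure_pmf.prob M (\<Union>S\<in>SS. B S)"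
  proof (rule measure_pmf.finite_measure_mono)
    show "(\<lambda>V. V ` {1..m}) -` {E. \<not> hg_connected {1..n} E} \<subseteq> (\<Union>S\<in>SS. B S)"
    proof
      fix V assume "V \<in> (\<lambda>V. V ` {1..m}) -` {E. \<not> hg_connected {1..n} E}"
      then have "\<not> hg_connected {1..n} (V ` {1..m})" by simp
      from disc_subset[OF this] obtain S where "S \<subseteq> {1..n}" "1 \<le> card S" "2 * card S \<le> n"
        "\<forall>i\<in>{1..m}. V i \<in> G S" unfolding G_def by blast
      then show "V \<in> (\<Union>S\<in>SS. B S)" unfolding SS_def B_def by blast
    qed
  qed simp
  also have "\<dots> \<le> (\<Sum>S\<in>SS. measure_pmf.prob M (B S))"
    by (rule measure_pmf.finite_measure_subadditive_finite[OF fSS]) simp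
  also have "\<dots> = (\<Sum>S\<in>SS. h (card S))"
  proof (rule sum.cong[OF refl])
    fix S assume "S \<in> SS"
    then have "S \<subseteq> {1..n}" by (simp add: SS_def)
    from prob_Pi[OF d1 this dn, of m]
    show "measure_pmf.prob M (B S) = h (card S)" unfolding M_def B_def G_def h_def by simp
  qed
  also have "SS = (\<Union>s\<in>{1..n div 2}. {S. S \<subseteq> {1..n} \<and> card S = s})"
    unfolding SS_def by auto
  also have "(\<Sum>S\<in>(\<Union>s\<in>{1..n div 2}. {S. S \<subseteq> {1..n} \<and> card S = s}). h (card S))
      = (\<Sum>s\<in>{1..n div 2}. (\<Sum>S\<in>{S. S \<subseteq> {1..n} \<and> card S = s}. h (card S)))"
  proof (rule sum.UNION_disjoint)
    show "\<forall>i\<in>{1..n div 2}. finite {S. S \<subseteq> {1..n} \<and> card S = i}"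
      by (auto intro: finite_subset[of _ "Pow {1..n}"])
  qed auto
  also have "\<dots> = (\<Sum>s\<in>{1..n div 2}. real (n choose s) * h s)"
  proof (rule sum.cong[OF refl])
    fix s
    have "(\<Sum>S\<in>{S. S \<subseteq> {1..n} \<and> card S = s}. h (card S)) = (\<Sum>S\<in>{S. S \<subseteq> {1..n} \<and> card S = s}. h s)"
      by (rule sum.cong) auto
    also have "\<dots> = real (n choose s) * h s" using n_subsets[of "{1..n}" s] by simp
    finally show "(\<Sum>S\<in>{S. S \<subseteq> {1..n} \<and> card S = s}. h (card S)) = real (n choose s) * h s" .
  qed
  finally show ?thesis unfolding h_def .
qed



lemma pow_powr_swap:
  fixes q k :: real
  assumes "0 \<le> q"
  shows "(q powr k) ^ m = (q ^ m) powr k"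
proof (cases "q = 0")
  case True then show ?thesis by (cases m) auto
next
  case False
  then have qp: "q > 0" using assms by simp
  have "(q powr k) ^ m = q powr (k * real m)"
    using qp by (simp add: powr_realpow[symmetric] powr_powr)
  also have "\<dots> = (q ^ m) powr k"
    using qp by (simp add: powr_realpow[symmetric] powr_powr mult.commute)
  finally show ?thesis .
qed

lemma ennr_first: "ennreal (x ^ Suc 0) \<le> (\<Sum>r. ennreal (x ^ Suc r))"
  using sum_le_suminf[of "\<lambda>r. ennreal (x ^ Suc r)" "{0}"] by (simp add: summableI)


theorem mainTheorem13:
  fixes n m d :: nat
  assumes "2 \<le> d" and "d \<le> n" and "1 \<le> m"
  shows "ennreal (measure_pmf.prob (H_star n m d) {E. \<not> hg_connected {1..n} E})
    \<le> ennreal (exp_lambda n m d)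
       + (\<Sum>r. ennreal ((exp_lambda n m d * exp 5) ^ Suc r))
       + ennreal ((2 / exp 1) ^ n)"
proof -
  define P where "P = measure_pmf.prob (H_star n m d) {E. \<not> hg_connected {1..n} E}"
  define q where "q = 1 - real d / real n"
  define Q where "Q = q ^ m"
  define x where "x = exp_lambda n m d * exp 5"
  have n2: "2 \<le> n" using assms by simp
  have q0: "0 \<le> q" unfolding q_def using assms by simp
  have Q0: "0 \<le> Q" unfolding Q_def using q0 by simp
  have lam: "exp_lambda n m d = real n * Q" unfolding exp_lambda_def Q_def q_def by simp
  have x: "x = Q * (exp 5 * real n)" unfolding x_def lam by simp
  have lam0: "0 \<le> exp_lambda n m d" using lam Q0 by simp
  have x0: "0 \<le> x" using x Q0 by simp
  have key: "P \<le> exp_lambda n m d + x"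
  proof (cases "x \<ge> 1")
    case True
    have "P \<le> 1" unfolding P_def by simp
    then show ?thesis using True lam0 by linarith
  next
    case False
    have "P \<le> (\<Sum>s\<in>{1..n div 2}. real (n choose s) *
          ((real (s choose d) + real ((n - s) choose d)) / real (n choose d)) ^ m)"
      unfolding P_def by (rule disc_bound) (use assms in auto)
    also have "\<dots> \<le> (\<Sum>s\<in>{1..n div 2}. real (n choose s) * Q powr (real s * real (n-s) / real (n-1)))"
    proof (rule sum_mono)
      fix s assume s: "s \<in> {1..n div 2}"
      have pb: "(real (s choose d) + real ((n-s) choose d)) / real (n choose d)
         \<le> q powr (real s * real (n-s) / real (n-1))"
        unfolding q_def by (rule p_bound) (use assms s in auto)
      have "((real (s choose d) + real ((n - s) choose d)) / real (n choose d)) ^ m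
           \<le> (q powr (real s * real (n-s) / real (n-1))) ^ m"
        by (rule power_mono[OF pb]) simp
      also have "\<dots> = Q powr (real s * real (n-s) / real (n-1))"
        unfolding Q_def by (rule pow_powr_swap[OF q0])
      finally show "real (n choose s) * ((real (s choose d) + real ((n - s) choose d)) / real (n choose d)) ^ m
           \<le> real (n choose s) * Q powr (real s * real (n-s) / real (n-1))"
        by (rule mult_left_mono) simp
    qed
    also have "\<dots> \<le> real n * Q + Q * (exp 5 * real n)"
      by (rule total_bound) (use n2 Q0 False x in auto)
    finally show ?thesis unfolding lam x .
  qed
  have "ennreal P \<le> ennreal (exp_lambda n m d + x)" using key by (rule ennreal_leI)
  also have "\<dots> = ennreal (exp_lambda n m d) + ennreal x"
    using lam0 x0 by (simp add: ennreal_plus)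
  also have "ennreal x \<le> (\<Sum>r. ennreal ((exp_lambda n m d * exp 5) ^ Suc r))"
    using ennr_first[of "exp_lambda n m d * exp 5"] unfolding x_def by simp
  finally have "ennreal P \<le> ennreal (exp_lambda n m d) + (\<Sum>r. ennreal ((exp_lambda n m d * exp 5) ^ Suc r))"
    by (simp add: add_left_mono)
  also have "\<dots> \<le> ennreal (exp_lambda n m d) + (\<Sum>r. ennreal ((exp_lambda n m d * exp 5) ^ Suc r))
       + ennreal ((2 / exp 1) ^ n)" by simp
  finally show ?thesis unfolding P_def .
qed

end
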